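(* Let $\mathbf C$ be a symmetric monoidal restriction category. The tensor unit $I$ of $\mathrm{Aux}(\mathbf C)$ is restriction terminal: for every object $A$, the morphism $!_A=[\lambda_A^{-1},A]\colon A\to I$ is total, and every total morphism $[f,E]\colon A\to I$ of $\mathrm{Aux}(\mathbf C)$ equals $!_A$. Consequently $\mathrm{Aux}(\mathbf C)$ is affine, and the projections $\pi_1=\rho_A\circ(\mathrm{id}_A\otimes !_B)\colon A\otimes B\to A$ and $\pi_2=\lambda_B\circ(!_A\otimes\mathrm{id}_B)\colon A\otimes B\to B$ (formed in $\mathrm{Aux}(\mathbf C)$) are total.
   Context: A restriction category is a category equipped with an assignment to each morphism $f\colon A\to B$ of an endomorphism $\overline{f}\colon A\to A$ such that (i) $f\circ\overline f=f$; (ii) $\overline f\circ\overline g=\overline g\circ\overline f$ whenever $f,g$ have a common domain; (iii) $\overline{g\circ\overline f}=\overline g\circ\overline f$ whenever $f,g$ have a common domain; (iv) $\overline g\circ f=f\circ\overline{g\circ f}$ whenever $g\circ f$ is defined. A morphism $f$ is total if $\overline f=\mathrm{id}$. A (symmetric) monoidal restriction category is a restriction category with a (symmetric) monoidal structure such that $\overline{f\otimes g}=\overline f\otimes\overline g$. An object $1$ is restriction terminal if every object has exactly one total morphism to $1$; a symmetric monoidal restriction category is affine if its tensor unit is restriction terminal. Let $\mathbf C$ be a symmetric monoidal restriction category with tensor unit $I$, associator $\alpha$, left unitor $\lambda$, right unitor $\rho$. For morphisms $f\colon A\to B\otimes E$ and $f'\colon A\to B\otimes E'$ write $f\triangleright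 f'$ if $\overline f=\overline{f'}$ and there is a morphism $h\colon E\to E'$ with $(\mathrm{id}_B\otimes h)\circ f=f'$. Let $\sim$ be the equivalence relation generated by $\triangleright$. The category $\mathrm{Aux}(\mathbf C)$ has the objects of $\mathbf C$; a morphism $A\to B$ is a $\sim$-class $[f,E]$ of a morphism $f\colon A\to B\otimes E$ of $\mathbf C$; composition is $[g,E']\circ[f,E]=[\alpha\circ(g\otimes\mathrm{id}_E)\circ f,\;E'\otimes E]$; identities are $[\rho^{-1},I]$. It is a symmetric monoidal restriction category with $\overline{[f,E]}=[\rho^{-1}\circ\overline f,I]$, tensor on objects as in $\mathbf C$, $[f,E]\otimes[f',E']=[\vartheta\circ(f\otimes f'),E\otimes E']$ where $\vartheta\colon(B\otimes E)\otimes(B'\otimes E')\cong(B\otimes B')\otimes(E\otimes E')$ is the canonical isomorphism, and coherence isomorphisms $[\rho^{-1}\circ\beta,I]$ for coherence isomorphisms $\beta$ of $\mathbf C$ (unitors of $\mathrm{Aux}(\mathbf C)$ are again written $\lambda,\rho$). *)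

theory Defs
  imports Main
begin

text \<open>A (symmetric monoidal restriction) category presented by its data:
  objects of type 'o, morphisms of type 'm, with explicit carriers.
  comp g f is g after f.  assoc A B C : (A*B)*C -> A*(B*C),
  lunit A : I*A -> A,  runit A : A*I -> A,  sym A B : A*B -> B*A.\<close>

record ('o, 'm) smrc =
  obj :: "'o set"
  arr :: "'m set"
  dom :: "'m \<Rightarrow> 'o"
  cod :: "'m \<Rightarrow> 'o"
  comp :: "'m \<Rightarrow> 'm \<Rightarrow> 'm"
  idm :: "'o \<Rightarrow> 'm"
  rst :: "'m \<Rightarrow> 'm"
  tobj :: "'o \<Rightarrow> 'o \<Rightarrow> 'o"
  tarr :: "'m \<Rightarrow> 'm \<Rightarrow> 'm"
  unit :: "'o"
  assoc :: "'o \<Rightarrow> 'o \<Rightarrow> 'o \<Rightarrow> 'm"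
  lunit :: "'o \<Rightarrow> 'm"
  runit :: "'o \<Rightarrow> 'm"
  sym :: "'o \<Rightarrow> 'o \<Rightarrow> 'm"

definition hom :: "('o, 'm) smrc \<Rightarrow> 'o \<Rightarrow> 'o \<Rightarrow> 'm set" where
  "hom C A B = {f \<in> arr C. dom C f = A \<and> cod C f = B}"

definition is_iso :: "('o, 'm) smrc \<Rightarrow> 'm \<Rightarrow> bool" where
  "is_iso C f \<longleftrightarrow> f \<in> arr C \<and> (\<exists>g \<in> hom C (cod C f) (dom C f).
      comp C g f = idm C (dom C f) \<and> comp C f g = idm C (cod C f))"

definition inv_arr :: "('o, 'm) smrc \<Rightarrow> 'm \<Rightarrow> 'm" where
  "inv_arr C f = (THE g. g \<in> hom C (cod C f) (dom C f) \<and>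
      comp C g f = idm C (dom C f) \<and> comp C f g = idm C (cod C f))"

definition is_category :: "('o, 'm) smrc \<Rightarrow> bool" where
  "is_category C \<longleftrightarrow>
     (\<forall>f \<in> arr C. dom C f \<in> obj C \<and> cod C f \<in> obj C) \<and>
     (\<forall>A \<in> obj C. idm C A \<in> hom C A A) \<and>
     (\<forall>f \<in> arr C. \<forall>g \<in> arr C. cod C f = dom C g \<longrightarrow> comp C g f \<in> hom C (dom C f) (cod C g)) \<and>
     (\<forall>f \<in> arr C. comp C f (idm C (dom C f)) = f \<and> comp C (idm C (cod C f)) f = f) \<and>
     (\<forall>f \<in> arr C. \<forall>g \<in> arr C. \<forall>h \<in> arr C. cod C f = dom C g \<longrightarrow> cod C g = dom C h \<longrightarrow>
        comp C h (comp C g f) = comp C (comp C h g) f)"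

definition is_restriction_category :: "('o, 'm) smrc \<Rightarrow> bool" where
  "is_restriction_category C \<longleftrightarrow> is_category C \<and>
     (\<forall>f \<in> arr C. rst C f \<in> hom C (dom C f) (dom C f)) \<and>
     (\<forall>f \<in> arr C. comp C f (rst C f) = f) \<and>
     (\<forall>f \<in> arr C. \<forall>g \<in> arr C. dom C f = dom C g \<longrightarrow>
        comp C (rst C f) (rst C g) = comp C (rst C g) (rst C f)) \<and>
     (\<forall>f \<in> arr C. \<forall>g \<in> arr C. dom C f = dom C g \<longrightarrow>
        rst C (comp C g (rst C f)) = comp C (rst C g) (rst C f)) \<and>
     (\<forall>f \<in> arr C. \<forall>g \<in> arr C. cod C f = dom C g \<longrightarrow>
        comp C (rst C g) f = comp C f (rst C (comp C g f)))"

definition is_smrc :: "('o, 'm) smrc \<Rightarrow> bool" where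
  "is_smrc C \<longleftrightarrow> is_restriction_category C \<and>
     unit C \<in> obj C \<and>
     (\<forall>A \<in> obj C. \<forall>B \<in> obj C. tobj C A B \<in> obj C) \<and>
     \<comment> \<open>tensor is a bifunctor\<close>
     (\<forall>f \<in> arr C. \<forall>g \<in> arr C. tarr C f g \<in>
        hom C (tobj C (dom C f) (dom C g)) (tobj C (cod C f) (cod C g))) \<and>
     (\<forall>A \<in> obj C. \<forall>B \<in> obj C. tarr C (idm C A) (idm C B) = idm C (tobj C A B)) \<and>
     (\<forall>f \<in> arr C. \<forall>g \<in> arr C. \<forall>f' \<in> arr C. \<forall>g' \<in> arr C.
        cod C f = dom C g \<longrightarrow> cod C f' = dom C g' \<longrightarrow>
        tarr C (comp C g f) (comp C g' f') = comp C (tarr C g g') (tarr C f f')) \<and>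
     \<comment> \<open>structure isomorphisms\<close>
     (\<forall>A \<in> obj C. \<forall>B \<in> obj C. \<forall>D \<in> obj C.
        assoc C A B D \<in> hom C (tobj C (tobj C A B) D) (tobj C A (tobj C B D)) \<and> is_iso C (assoc C A B D)) \<and>
     (\<forall>A \<in> obj C. lunit C A \<in> hom C (tobj C (unit C) A) A \<and> is_iso C (lunit C A)) \<and>
     (\<forall>A \<in> obj C. runit C A \<in> hom C (tobj C A (unit C)) A \<and> is_iso C (runit C A)) \<and>
     (\<forall>A \<in> obj C. \<forall>B \<in> obj C. sym C A B \<in> hom C (tobj C A B) (tobj C B A) \<and> is_iso C (sym C A B)) \<and>
     \<comment> \<open>naturality\<close>
     (\<forall>f \<in> arr C. \<forall>g \<in> arr C. \<forall>h \<in> arr C.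
        comp C (assoc C (cod C f) (cod C g) (cod C h)) (tarr C (tarr C f g) h) =
        comp C (tarr C f (tarr C g h)) (assoc C (dom C f) (dom C g) (dom C h))) \<and>
     (\<forall>f \<in> arr C. comp C (lunit C (cod C f)) (tarr C (idm C (unit C)) f) = comp C f (lunit C (dom C f))) \<and>
     (\<forall>f \<in> arr C. comp C (runit C (cod C f)) (tarr C f (idm C (unit C))) = comp C f (runit C (dom C f))) \<and>
     (\<forall>f \<in> arr C. \<forall>g \<in> arr C.
        comp C (sym C (cod C f) (cod C g)) (tarr C f g) = comp C (tarr C g f) (sym C (dom C f) (dom C g))) \<and>
     \<comment> \<open>coherence: pentagon, triangle, hexagon, symmetry\<close>
     (\<forall>A \<in> obj C. \<forall>B \<in> obj C. \<forall>D \<in> obj C. \<forall>E \<in> obj C.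
        comp C (assoc C A B (tobj C D E)) (assoc C (tobj C A B) D E) =
        comp C (tarr C (idm C A) (assoc C B D E))
          (comp C (assoc C A (tobj C B D) E) (tarr C (assoc C A B D) (idm C E)))) \<and>
     (\<forall>A \<in> obj C. \<forall>B \<in> obj C.
        comp C (tarr C (idm C A) (lunit C B)) (assoc C A (unit C) B) = tarr C (runit C A) (idm C B)) \<and>
     (\<forall>A \<in> obj C. \<forall>B \<in> obj C. \<forall>D \<in> obj C.
        comp C (assoc C B D A) (comp C (sym C A (tobj C B D)) (assoc C A B D)) =
        comp C (tarr C (idm C B) (sym C A D))
          (comp C (assoc C B A D) (tarr C (sym C A B) (idm C D)))) \<and>
     (\<forall>A \<in> obj C. \<forall>B \<in> obj C. comp C (sym C B A) (sym C A B) = idm C (tobj C A B)) \<and>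
     \<comment> \<open>monoidal restriction\<close>
     (\<forall>f \<in> arr C. \<forall>g \<in> arr C. rst C (tarr C f g) = tarr C (rst C f) (rst C g))"

text \<open>The canonical isomorphism (B*E)*(B'*E') -> (B*B')*(E*E').\<close>
definition theta :: "('o, 'm) smrc \<Rightarrow> 'o \<Rightarrow> 'o \<Rightarrow> 'o \<Rightarrow> 'o \<Rightarrow> 'm" where
  "theta C B E B' E' =
     comp C (inv_arr C (assoc C B B' (tobj C E E')))
      (comp C (tarr C (idm C B)
                 (comp C (assoc C B' E E')
                   (comp C (tarr C (sym C E B') (idm C E')) (inv_arr C (assoc C E B' E')))))
        (assoc C B E (tobj C B' E')))"

text \<open>A morphism A -> B of Aux(C) is represented by a pair (f, E) with
  f : A -> B*E; two representatives denote the same Aux-morphism iff they are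
  related by the equivalence relation generated by the step relation.\<close>

definition aux_step :: "('o, 'm) smrc \<Rightarrow> 'o \<Rightarrow> 'o \<Rightarrow> ('m \<times> 'o) \<Rightarrow> ('m \<times> 'o) \<Rightarrow> bool" where
  "aux_step C A B p q \<longleftrightarrow> (case p of (f, E) \<Rightarrow> case q of (f', E') \<Rightarrow>
     E \<in> obj C \<and> E' \<in> obj C \<and>
     f \<in> hom C A (tobj C B E) \<and> f' \<in> hom C A (tobj C B E') \<and>
     rst C f = rst C f' \<and>
     (\<exists>h \<in> hom C E E'. comp C (tarr C (idm C B) h) f = f'))"

definition aux_eq :: "('o, 'm) smrc \<Rightarrow> 'o \<Rightarrow> 'o \<Rightarrow> ('m \<times> 'o) \<Rightarrow> ('m \<times> 'o) \<Rightarrow> bool" where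
  "aux_eq C A B = equivclp (aux_step C A B)"

definition aux_id :: "('o, 'm) smrc \<Rightarrow> 'o \<Rightarrow> 'm \<times> 'o" where
  "aux_id C A = (inv_arr C (runit C A), unit C)"

text \<open>Composition [g,E'] o [f,E] where g : Y -> Z*E' (Z given explicitly).\<close>
definition aux_comp :: "('o, 'm) smrc \<Rightarrow> 'o \<Rightarrow> 'm \<times> 'o \<Rightarrow> 'm \<times> 'o \<Rightarrow> 'm \<times> 'o" where
  "aux_comp C Z p q = (case p of (g, E') \<Rightarrow> case q of (f, E) \<Rightarrow>
     (comp C (assoc C Z E' E) (comp C (tarr C g (idm C E)) f), tobj C E' E))"

definition aux_rst :: "('o, 'm) smrc \<Rightarrow> 'm \<times> 'o \<Rightarrow> 'm \<times> 'o" where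
  "aux_rst C p = (case p of (f, E) \<Rightarrow> (comp C (inv_arr C (runit C (dom C f))) (rst C f), unit C))"

text \<open>Tensor [f,E] * [f',E'] where f : A -> B*E, f' : A' -> B'*E'.\<close>
definition aux_tensor :: "('o, 'm) smrc \<Rightarrow> 'o \<Rightarrow> 'o \<Rightarrow> 'm \<times> 'o \<Rightarrow> 'm \<times> 'o \<Rightarrow> 'm \<times> 'o" where
  "aux_tensor C B B' p q = (case p of (f, E) \<Rightarrow> case q of (f', E') \<Rightarrow>
     (comp C (theta C B E B' E') (tarr C f f'), tobj C E E'))"

text \<open>Coherence isomorphism of Aux(C) induced by a coherence iso beta of C.\<close>
definition aux_coh :: "('o, 'm) smrc \<Rightarrow> 'm \<Rightarrow> 'm \<times> 'o" where
  "aux_coh C \<beta> = (comp C (inv_arr C (runit C (cod C \<beta>))) \<beta>, unit C)"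

definition aux_total :: "('o, 'm) smrc \<Rightarrow> 'o \<Rightarrow> 'm \<times> 'o \<Rightarrow> bool" where
  "aux_total C A p \<longleftrightarrow> aux_eq C A A (aux_rst C p) (aux_id C A)"

definition aux_bang :: "('o, 'm) smrc \<Rightarrow> 'o \<Rightarrow> 'm \<times> 'o" where
  "aux_bang C A = (inv_arr C (lunit C A), A)"

definition aux_pi1 :: "('o, 'm) smrc \<Rightarrow> 'o \<Rightarrow> 'o \<Rightarrow> 'm \<times> 'o" where
  "aux_pi1 C A B = aux_comp C A (aux_coh C (runit C A))
      (aux_tensor C A (unit C) (aux_id C A) (aux_bang C B))"

definition aux_pi2 :: "('o, 'm) smrc \<Rightarrow> 'o \<Rightarrow> 'o \<Rightarrow> 'm \<times> 'o" where
  "aux_pi2 C A B = aux_comp C B (aux_coh C (lunit C B))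
      (aux_tensor C (unit C) B (aux_bang C A) (aux_id C B))"

end

theory Submission
  imports Defs
begin

locale sm =
  fixes C :: "('o, 'm) smrc"
  assumes S: "is_smrc C"
begin

lemma RC: "is_restriction_category C" using S unfolding is_smrc_def by blast
lemma CAT: "is_category C" using RC unfolding is_restriction_category_def by blast

lemma dom_obj: "f \<in> arr C \<Longrightarrow> dom C f \<in> obj C" using CAT unfolding is_category_def by blast
lemma cod_obj: "f \<in> arr C \<Longrightarrow> cod C f \<in> obj C" using CAT unfolding is_category_def by blast
lemma id_hom: "A \<in> obj C \<Longrightarrow> idm C A \<in> hom C A A" using CAT unfolding is_category_def by blast
lemma comp_hom: "f \<in> arr C \<Longrightarrow> g \<in> arr C \<Longrightarrow> cod C f = dom C g \<Longrightarrow> comp C g f \<in> hom C (dom C f) (cod C g)"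
  using CAT unfolding is_category_def by blast
lemma id_r: "f \<in> arr C \<Longrightarrow> comp C f (idm C (dom C f)) = f" using CAT unfolding is_category_def by blast
lemma id_l: "f \<in> arr C \<Longrightarrow> comp C (idm C (cod C f)) f = f" using CAT unfolding is_category_def by blast
lemma assoc_c: "f \<in> arr C \<Longrightarrow> g \<in> arr C \<Longrightarrow> h \<in> arr C \<Longrightarrow> cod C f = dom C g \<Longrightarrow> cod C g = dom C h \<Longrightarrow>
        comp C h (comp C g f) = comp C (comp C h g) f" using CAT unfolding is_category_def by blast

lemma rst_hom: "f \<in> arr C \<Longrightarrow> rst C f \<in> hom C (dom C f) (dom C f)" using RC unfolding is_restriction_category_def by blast
lemma rst1: "f \<in> arr C \<Longrightarrow> comp C f (rst C f) = f" using RC unfolding is_restriction_category_def by blast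
lemma rst3: "f \<in> arr C \<Longrightarrow> g \<in> arr C \<Longrightarrow> dom C f = dom C g \<Longrightarrow>
        rst C (comp C g (rst C f)) = comp C (rst C g) (rst C f)" using RC unfolding is_restriction_category_def by blast

lemma unit_obj: "unit C \<in> obj C" using S unfolding is_smrc_def by (elim conjE) assumption
lemma tobj_all: "\<forall>A \<in> obj C. \<forall>B \<in> obj C. tobj C A B \<in> obj C" using S unfolding is_smrc_def by (elim conjE) assumption
lemma tobj_obj: "A \<in> obj C \<Longrightarrow> B \<in> obj C \<Longrightarrow> tobj C A B \<in> obj C" using tobj_all by blast
lemma tarr_hom_all: "\<forall>f \<in> arr C. \<forall>g \<in> arr C. tarr C f g \<in> hom C (tobj C (dom C f) (dom C g)) (tobj C (cod C f) (cod C g))"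
  using S unfolding is_smrc_def by (elim conjE) assumption
lemma tarr_hom: "f \<in> arr C \<Longrightarrow> g \<in> arr C \<Longrightarrow> tarr C f g \<in> hom C (tobj C (dom C f) (dom C g)) (tobj C (cod C f) (cod C g))"
  using tarr_hom_all by blast
lemma tarr_id_all: "\<forall>A \<in> obj C. \<forall>B \<in> obj C. tarr C (idm C A) (idm C B) = idm C (tobj C A B)" using S unfolding is_smrc_def by (elim conjE) assumption
lemma tarr_id: "A \<in> obj C \<Longrightarrow> B \<in> obj C \<Longrightarrow> tarr C (idm C A) (idm C B) = idm C (tobj C A B)" using tarr_id_all by blast
lemma tarr_comp_all: "\<forall>f \<in> arr C. \<forall>g \<in> arr C. \<forall>f' \<in> arr C. \<forall>g' \<in> arr C.
        cod C f = dom C g \<longrightarrow> cod C f' = dom C g' \<longrightarrow>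
        tarr C (comp C g f) (comp C g' f') = comp C (tarr C g g') (tarr C f f')" using S unfolding is_smrc_def by (elim conjE) assumption
lemma tarr_comp: "f \<in> arr C \<Longrightarrow> g \<in> arr C \<Longrightarrow> f' \<in> arr C \<Longrightarrow> g' \<in> arr C \<Longrightarrow>
        cod C f = dom C g \<Longrightarrow> cod C f' = dom C g' \<Longrightarrow>
        tarr C (comp C g f) (comp C g' f') = comp C (tarr C g g') (tarr C f f')" using tarr_comp_all by blast
lemma assoc_all: "\<forall>A \<in> obj C. \<forall>B \<in> obj C. \<forall>D \<in> obj C.
        assoc C A B D \<in> hom C (tobj C (tobj C A B) D) (tobj C A (tobj C B D)) \<and> is_iso C (assoc C A B D)"
  using S unfolding is_smrc_def by (elim conjE) assumption
lemma assoc_iso: "A \<in> obj C \<Longrightarrow> B \<in> obj C \<Longrightarrow> D \<in> obj C \<Longrightarrow>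
        assoc C A B D \<in> hom C (tobj C (tobj C A B) D) (tobj C A (tobj C B D)) \<and> is_iso C (assoc C A B D)"
  using assoc_all by blast
lemma lunit_all: "\<forall>A \<in> obj C. lunit C A \<in> hom C (tobj C (unit C) A) A \<and> is_iso C (lunit C A)"
  using S unfolding is_smrc_def by (elim conjE) assumption
lemma lunit_iso: "A \<in> obj C \<Longrightarrow> lunit C A \<in> hom C (tobj C (unit C) A) A \<and> is_iso C (lunit C A)"
  using lunit_all by blast
lemma runit_all: "\<forall>A \<in> obj C. runit C A \<in> hom C (tobj C A (unit C)) A \<and> is_iso C (runit C A)"
  using S unfolding is_smrc_def by (elim conjE) assumption
lemma runit_iso: "A \<in> obj C \<Longrightarrow> runit C A \<in> hom C (tobj C A (unit C)) A \<and> is_iso C (runit C A)"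
  using runit_all by blast
lemma sym_all: "\<forall>A \<in> obj C. \<forall>B \<in> obj C. sym C A B \<in> hom C (tobj C A B) (tobj C B A) \<and> is_iso C (sym C A B)"
  using S unfolding is_smrc_def by (elim conjE) assumption
lemma sym_iso: "A \<in> obj C \<Longrightarrow> B \<in> obj C \<Longrightarrow> sym C A B \<in> hom C (tobj C A B) (tobj C B A) \<and> is_iso C (sym C A B)"
  using sym_all by blast
lemma lunit_nat_all: "\<forall>f \<in> arr C. comp C (lunit C (cod C f)) (tarr C (idm C (unit C)) f) = comp C f (lunit C (dom C f))"
  using S unfolding is_smrc_def by (elim conjE) assumption
lemma lunit_nat: "f \<in> arr C \<Longrightarrow> comp C (lunit C (cod C f)) (tarr C (idm C (unit C)) f) = comp C f (lunit C (dom C f))"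
  using lunit_nat_all by blast

lemma inv_prop:
  assumes "is_iso C f"
  shows "inv_arr C f \<in> hom C (cod C f) (dom C f) \<and>
      comp C (inv_arr C f) f = idm C (dom C f) \<and> comp C f (inv_arr C f) = idm C (cod C f)"
proof -
  from assms obtain g where g: "g \<in> hom C (cod C f) (dom C f)" "comp C g f = idm C (dom C f)" "comp C f g = idm C (cod C f)"
    and f: "f \<in> arr C" unfolding is_iso_def by blast
  have ga: "g \<in> arr C" "dom C g = cod C f" "cod C g = dom C f" using g(1) unfolding hom_def by auto
  have uniq: "g' = g" if "g' \<in> hom C (cod C f) (dom C f)" "comp C g' f = idm C (dom C f)" "comp C f g' = idm C (cod C f)" for g'
  proof -
    have ha: "g' \<in> arr C" "dom C g' = cod C f" "cod C g' = dom C f" using that(1) unfolding hom_def by auto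
    have "g' = comp C g' (idm C (dom C g'))" using id_r[OF ha(1)] by simp
    also have "\<dots> = comp C g' (comp C f g)" using g(3) ha(2) by simp
    also have "\<dots> = comp C (comp C g' f) g" using assoc_c[OF ga(1) f ha(1)] ga ha by simp
    also have "\<dots> = comp C (idm C (cod C g)) g" using that(2) ga(3) by simp
    also have "\<dots> = g" using id_l[OF ga(1)] .
    finally show ?thesis .
  qed
  have "inv_arr C f = g" unfolding inv_arr_def
    apply (rule the_equality)
     apply (rule conjI[OF g(1) conjI[OF g(2) g(3)]])
    apply (rule uniq; simp)
    done
  thus ?thesis using g by simp
qed

lemma iso_arr: "is_iso C f \<Longrightarrow> f \<in> arr C" unfolding is_iso_def by blast

lemma inv_iso: assumes "is_iso C f" shows "is_iso C (inv_arr C f)"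
  using inv_prop[OF assms] iso_arr[OF assms] unfolding is_iso_def hom_def by auto

lemma inv_dom: "is_iso C f \<Longrightarrow> dom C (inv_arr C f) = cod C f" using inv_prop unfolding hom_def by auto
lemma inv_cod: "is_iso C f \<Longrightarrow> cod C (inv_arr C f) = dom C f" using inv_prop unfolding hom_def by auto

lemma id_iso: assumes "A \<in> obj C" shows "is_iso C (idm C A)"
proof -
  have h: "idm C A \<in> hom C A A" using id_hom assms .
  then have "comp C (idm C A) (idm C A) = idm C A" using id_r[of "idm C A"] unfolding hom_def by auto
  then show ?thesis using h unfolding is_iso_def hom_def by auto
qed

lemma comp_iso:
  assumes f: "is_iso C f" and g: "is_iso C g" and c: "cod C f = dom C g"
  shows "is_iso C (comp C g f)"
proof -
  note F = inv_prop[OF f] and G = inv_prop[OF g]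
  have fa: "f \<in> arr C" "g \<in> arr C" using f g iso_arr by auto
  let ?fi = "inv_arr C f" and ?gi = "inv_arr C g"
  have fia: "?fi \<in> arr C" "?gi \<in> arr C" using F G unfolding hom_def by auto
  have gf: "comp C g f \<in> hom C (dom C f) (cod C g)" using comp_hom fa c by auto
  have ii: "comp C ?fi ?gi \<in> hom C (cod C g) (dom C f)" using comp_hom[of ?gi ?fi] fia F G c unfolding hom_def by auto
  have e1: "comp C (comp C ?fi ?gi) (comp C g f) = idm C (dom C f)"
  proof -
    have "comp C (comp C ?fi ?gi) (comp C g f) = comp C ?fi (comp C ?gi (comp C g f))"
      using assoc_c[of "comp C g f" ?gi ?fi] gf fia F G c unfolding hom_def by auto
    also have "comp C ?gi (comp C g f) = comp C (comp C ?gi g) f"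
      using assoc_c[of f g ?gi] fa fia G c unfolding hom_def by auto
    also have "\<dots> = f" using G c id_l[of f] fa by simp
    finally show ?thesis using F by simp
  qed
  have e2: "comp C (comp C g f) (comp C ?fi ?gi) = idm C (cod C g)"
  proof -
    have "comp C (comp C g f) (comp C ?fi ?gi) = comp C g (comp C f (comp C ?fi ?gi))"
      using assoc_c[of "comp C ?fi ?gi" f g] ii fa fia F G c unfolding hom_def by auto
    also have "comp C f (comp C ?fi ?gi) = comp C (comp C f ?fi) ?gi"
      using assoc_c[of ?gi ?fi f] fa fia F G c unfolding hom_def by auto
    also have "\<dots> = ?gi" using F G c id_l[of ?gi] fia unfolding hom_def by auto
    finally show ?thesis using G by simp
  qed
  show ?thesis using gf ii e1 e2 unfolding is_iso_def hom_def by auto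
qed

lemma tarr_iso:
  assumes f: "is_iso C f" and g: "is_iso C g"
  shows "is_iso C (tarr C f g)"
proof -
  note F = inv_prop[OF f] and G = inv_prop[OF g]
  have fa: "f \<in> arr C" "g \<in> arr C" using f g iso_arr by auto
  let ?fi = "inv_arr C f" and ?gi = "inv_arr C g"
  have fia: "?fi \<in> arr C" "?gi \<in> arr C" using F G unfolding hom_def by auto
  have t: "tarr C f g \<in> hom C (tobj C (dom C f) (dom C g)) (tobj C (cod C f) (cod C g))" using tarr_hom fa by auto
  have ti: "tarr C ?fi ?gi \<in> hom C (tobj C (cod C f) (cod C g)) (tobj C (dom C f) (dom C g))"
    using tarr_hom[OF fia] F G unfolding hom_def by auto
  have e1: "comp C (tarr C ?fi ?gi) (tarr C f g) = idm C (tobj C (dom C f) (dom C g))"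
    using tarr_comp[of f ?fi g ?gi] fa fia F G tarr_id dom_obj fa unfolding hom_def by auto
  have e2: "comp C (tarr C f g) (tarr C ?fi ?gi) = idm C (tobj C (cod C f) (cod C g))"
    using tarr_comp[of ?fi f ?gi g] fa fia F G tarr_id cod_obj fa unfolding hom_def by auto
  show ?thesis using t ti e1 e2 unfolding is_iso_def hom_def by auto
qed

lemma rst_iso: assumes f: "is_iso C f" shows "rst C f = idm C (dom C f)"
proof -
  note F = inv_prop[OF f]
  have fa: "f \<in> arr C" using f iso_arr by auto
  have r: "rst C f \<in> hom C (dom C f) (dom C f)" using rst_hom fa .
  have "rst C f = comp C (idm C (dom C f)) (rst C f)" using id_l[of "rst C f"] r unfolding hom_def by auto
  also have "\<dots> = comp C (comp C (inv_arr C f) f) (rst C f)" using F by simp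
  also have "\<dots> = comp C (inv_arr C f) (comp C f (rst C f))"
    using assoc_c[of "rst C f" f "inv_arr C f"] r fa F unfolding hom_def by auto
  also have "\<dots> = idm C (dom C f)" using rst1 fa F by simp
  finally show ?thesis .
qed


definition isoh where "isoh f X Y \<longleftrightarrow> is_iso C f \<and> f \<in> hom C X Y"

lemma isoh_comp: assumes "isoh f X Y" "isoh g Y Z" shows "isoh (comp C g f) X Z"
proof -
  have a: "is_iso C f" "f \<in> arr C" "dom C f = X" "cod C f = Y" "is_iso C g" "g \<in> arr C" "dom C g = Y" "cod C g = Z"
    using assms unfolding isoh_def hom_def by auto
  show ?thesis unfolding isoh_def using comp_iso[OF a(1) a(5)] comp_hom[OF a(2) a(6)] a by simp
qed
lemma isoh_tarr: assumes "isoh f X Y" "isoh g X' Y'" shows "isoh (tarr C f g) (tobj C X X') (tobj C Y Y')"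
proof -
  have a: "is_iso C f" "f \<in> arr C" "dom C f = X" "cod C f = Y" "is_iso C g" "g \<in> arr C" "dom C g = X'" "cod C g = Y'"
    using assms unfolding isoh_def hom_def by auto
  show ?thesis unfolding isoh_def using tarr_iso[OF a(1) a(5)] tarr_hom[OF a(2) a(6)] a by simp
qed
lemma isoh_inv: assumes "isoh f X Y" shows "isoh (inv_arr C f) Y X"
proof -
  have a: "is_iso C f" "dom C f = X" "cod C f = Y" using assms unfolding isoh_def hom_def by auto
  show ?thesis unfolding isoh_def using inv_iso[OF a(1)] inv_prop[OF a(1)] a by simp
qed
lemma isoh_id: "X \<in> obj C \<Longrightarrow> isoh (idm C X) X X"
  unfolding isoh_def using id_iso id_hom by blast
lemma isoh_assoc: "A \<in> obj C \<Longrightarrow> B \<in> obj C \<Longrightarrow> D \<in> obj C \<Longrightarrow> isoh (assoc C A B D) (tobj C (tobj C A B) D) (tobj C A (tobj C B D))"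
  unfolding isoh_def using assoc_iso by blast
lemma isoh_lunit: "A \<in> obj C \<Longrightarrow> isoh (lunit C A) (tobj C (unit C) A) A"
  unfolding isoh_def using lunit_iso by blast
lemma isoh_runit: "A \<in> obj C \<Longrightarrow> isoh (runit C A) (tobj C A (unit C)) A"
  unfolding isoh_def using runit_iso by blast
lemma isoh_sym: "A \<in> obj C \<Longrightarrow> B \<in> obj C \<Longrightarrow> isoh (sym C A B) (tobj C A B) (tobj C B A)"
  unfolding isoh_def using sym_iso by blast

lemmas isoh_intros = isoh_comp isoh_tarr isoh_inv isoh_id isoh_assoc isoh_lunit isoh_runit isoh_sym
  tobj_obj unit_obj

lemma isoh_theta: "B \<in> obj C \<Longrightarrow> E \<in> obj C \<Longrightarrow> B' \<in> obj C \<Longrightarrow> E' \<in> obj C \<Longrightarrow>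
  isoh (theta C B E B' E') (tobj C (tobj C B E) (tobj C B' E')) (tobj C (tobj C B B') (tobj C E E'))"
  proof -
  assume o: "B \<in> obj C" "E \<in> obj C" "B' \<in> obj C" "E' \<in> obj C"
  have i1: "isoh (inv_arr C (assoc C E B' E')) (tobj C E (tobj C B' E')) (tobj C (tobj C E B') E')"
    using isoh_inv[OF isoh_assoc[OF o(2) o(3) o(4)]] .
  have i2: "isoh (tarr C (sym C E B') (idm C E')) (tobj C (tobj C E B') E') (tobj C (tobj C B' E) E')"
    using isoh_tarr[OF isoh_sym[OF o(2) o(3)] isoh_id[OF o(4)]] .
  have i3: "isoh (assoc C B' E E') (tobj C (tobj C B' E) E') (tobj C B' (tobj C E E'))"
    using isoh_assoc[OF o(3) o(2) o(4)] .
  have i4: "isoh (comp C (assoc C B' E E') (comp C (tarr C (sym C E B') (idm C E')) (inv_arr C (assoc C E B' E'))))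
     (tobj C E (tobj C B' E')) (tobj C B' (tobj C E E'))"
    using isoh_comp[OF isoh_comp[OF i1 i2] i3] .
  have i5: "isoh (tarr C (idm C B) (comp C (assoc C B' E E') (comp C (tarr C (sym C E B') (idm C E')) (inv_arr C (assoc C E B' E')))))
     (tobj C B (tobj C E (tobj C B' E'))) (tobj C B (tobj C B' (tobj C E E')))"
    using isoh_tarr[OF isoh_id[OF o(1)] i4] .
  have i6: "isoh (assoc C B E (tobj C B' E')) (tobj C (tobj C B E) (tobj C B' E')) (tobj C B (tobj C E (tobj C B' E')))"
    using isoh_assoc[OF o(1) o(2) tobj_obj[OF o(3) o(4)]] .
  have i7: "isoh (inv_arr C (assoc C B B' (tobj C E E'))) (tobj C B (tobj C B' (tobj C E E'))) (tobj C (tobj C B B') (tobj C E E'))"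
    using isoh_inv[OF isoh_assoc[OF o(1) o(3) tobj_obj[OF o(2) o(4)]]] .
  show ?thesis unfolding theta_def using isoh_comp[OF isoh_comp[OF i6 i5] i7] .
qed

lemma isoh_total: assumes "isoh F X Y" shows "aux_total C X (F, E)"
proof -
  have F: "is_iso C F" "dom C F = X" using assms unfolding isoh_def hom_def by auto
  have X: "X \<in> obj C" using F iso_arr dom_obj by auto
  have r: "inv_arr C (runit C X) \<in> hom C X (tobj C X (unit C))"
    using inv_prop runit_iso[OF X] unfolding hom_def by auto
  have "aux_rst C (F, E) = aux_id C X"
    unfolding aux_rst_def aux_id_def using F rst_iso id_r[of "inv_arr C (runit C X)"] r unfolding hom_def by auto
  thus ?thesis unfolding aux_total_def aux_eq_def by simp
qed

lemma part1: assumes "A \<in> obj C" shows "aux_total C A (aux_bang C A)"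
  unfolding aux_bang_def by (rule isoh_total[where Y="tobj C (unit C) A"]) (intro isoh_intros assms)

lemma aux_eq_rst: "aux_eq C A B p q \<Longrightarrow> rst C (fst p) = rst C (fst q)"
  unfolding aux_eq_def
proof (induction rule: equivclp_induct)
  case base then show ?case by simp
next
  case (step y z) then show ?case unfolding aux_step_def by (auto split: prod.splits)
qed

lemma part2:
  assumes A: "A \<in> obj C" and E: "E \<in> obj C" and f: "f \<in> hom C A (tobj C (unit C) E)"
    and tot: "aux_total C A (f, E)"
  shows "aux_eq C A (unit C) (f, E) (aux_bang C A)"
proof -
  have fa: "f \<in> arr C" "dom C f = A" "cod C f = tobj C (unit C) E" using f unfolding hom_def by auto
  have ri: "isoh (inv_arr C (runit C A)) A (tobj C A (unit C))" by (intro isoh_intros A)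
  hence ria: "inv_arr C (runit C A) \<in> arr C" "dom C (inv_arr C (runit C A)) = A"
    and rii: "is_iso C (inv_arr C (runit C A))" unfolding isoh_def hom_def by auto
  have "rst C (comp C (inv_arr C (runit C A)) (rst C f)) = rst C (inv_arr C (runit C A))"
    using aux_eq_rst[OF tot[unfolded aux_total_def]] fa unfolding aux_rst_def aux_id_def by simp
  moreover have "rst C (comp C (inv_arr C (runit C A)) (rst C f)) = comp C (idm C A) (rst C f)"
    using rst3[of f "inv_arr C (runit C A)"] fa ria rst_iso[OF rii] by simp
  moreover have "comp C (idm C A) (rst C f) = rst C f" using id_l[of "rst C f"] rst_hom[OF fa(1)] fa unfolding hom_def by auto
  ultimately have rf: "rst C f = idm C A" using rst_iso[OF rii] ria by simp
  have li: "isoh (inv_arr C (lunit C A)) A (tobj C (unit C) A)" by (intro isoh_intros A)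
  hence lia: "inv_arr C (lunit C A) \<in> hom C A (tobj C (unit C) A)" and lii: "is_iso C (inv_arr C (lunit C A))"
    unfolding isoh_def by auto
  define h where "h = comp C (lunit C E) f"
  have LE: "lunit C E \<in> hom C (tobj C (unit C) E) E" "is_iso C (lunit C E)" using lunit_iso[OF E] by auto
  have LA: "lunit C A \<in> hom C (tobj C (unit C) A) A" "is_iso C (lunit C A)" using lunit_iso[OF A] by auto
  have hh: "h \<in> hom C A E" unfolding h_def using comp_hom[of f "lunit C E"] fa LE unfolding hom_def by auto
  have ha: "h \<in> arr C" "dom C h = A" "cod C h = E" using hh unfolding hom_def by auto
  have U: "unit C \<in> obj C" by (rule unit_obj)
  have iu: "idm C (unit C) \<in> hom C (unit C) (unit C)" using id_hom[OF U] .
  have T: "tarr C (idm C (unit C)) h \<in> hom C (tobj C (unit C) A) (tobj C (unit C) E)"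
    using tarr_hom[of "idm C (unit C)" h] iu ha unfolding hom_def by auto
  note LEi = inv_prop[OF LE(2)] and LAi = inv_prop[OF LA(2)]
  have key: "comp C (tarr C (idm C (unit C)) h) (inv_arr C (lunit C A)) = f"
  proof -
    let ?t = "tarr C (idm C (unit C)) h"
    have "?t = comp C (idm C (tobj C (unit C) E)) ?t" using id_l[of ?t] T unfolding hom_def by auto
    also have "\<dots> = comp C (comp C (inv_arr C (lunit C E)) (lunit C E)) ?t" using LEi LE unfolding hom_def by auto
    also have "\<dots> = comp C (inv_arr C (lunit C E)) (comp C (lunit C E) ?t)"
      using assoc_c[of ?t "lunit C E" "inv_arr C (lunit C E)"] T LE LEi unfolding hom_def by auto
    also have "comp C (lunit C E) ?t = comp C h (lunit C A)" using lunit_nat[OF ha(1)] ha by simp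
    finally have t: "?t = comp C (inv_arr C (lunit C E)) (comp C h (lunit C A))" .
    have "comp C ?t (inv_arr C (lunit C A)) = comp C (inv_arr C (lunit C E)) (comp C (comp C h (lunit C A)) (inv_arr C (lunit C A)))"
    proof -
      have hl: "comp C h (lunit C A) \<in> hom C (tobj C (unit C) A) E"
        using comp_hom[of "lunit C A" h] LA ha unfolding hom_def by auto
      have a1: "inv_arr C (lunit C A) \<in> arr C" "cod C (inv_arr C (lunit C A)) = tobj C (unit C) A"
        using LAi LA unfolding hom_def by auto
      have a2: "comp C h (lunit C A) \<in> arr C" "dom C (comp C h (lunit C A)) = tobj C (unit C) A"
          "cod C (comp C h (lunit C A)) = E" using hl unfolding hom_def by auto
      have a3: "inv_arr C (lunit C E) \<in> arr C" "dom C (inv_arr C (lunit C E)) = E"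
        using LEi LE unfolding hom_def by auto
      show ?thesis unfolding t
        by (rule assoc_c[OF a1(1) a2(1) a3(1), symmetric]) (simp_all add: a1 a2 a3)
    qed
    also have "comp C (comp C h (lunit C A)) (inv_arr C (lunit C A)) = comp C h (comp C (lunit C A) (inv_arr C (lunit C A)))"
      using assoc_c[of "inv_arr C (lunit C A)" "lunit C A" h] LA LAi ha unfolding hom_def by auto
    also have "\<dots> = h" using LAi LA id_r[of h] ha unfolding hom_def by auto
    also have "comp C (inv_arr C (lunit C E)) h = comp C (comp C (inv_arr C (lunit C E)) (lunit C E)) f"
      unfolding h_def using assoc_c[of f "lunit C E" "inv_arr C (lunit C E)"] fa LE LEi unfolding hom_def by auto
    also have "\<dots> = f" using LEi LE id_l[of f] fa unfolding hom_def by auto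
    finally show ?thesis .
  qed
  have st: "aux_step C A (unit C) (aux_bang C A) (f, E)"
    unfolding aux_step_def aux_bang_def using A E lia f rf rst_iso[OF lii] lia hh key unfolding hom_def by auto
  show ?thesis unfolding aux_eq_def using st by blast
qed

lemma part3: assumes A: "A \<in> obj C" and B: "B \<in> obj C"
  shows "aux_total C (tobj C A B) (aux_pi1 C A B) \<and> aux_total C (tobj C A B) (aux_pi2 C A B)"
proof -
  have cr: "cod C (runit C A) = A" "cod C (lunit C B) = B"
    using runit_iso[OF A] lunit_iso[OF B] unfolding hom_def by auto
  have U: "unit C \<in> obj C" by (rule unit_obj)
  have IB: "tobj C (unit C) B \<in> obj C" using tobj_obj[OF U B] .
  have AI: "tobj C A (unit C) \<in> obj C" using tobj_obj[OF A U] .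
  have p1: "isoh (comp C (assoc C A (unit C) (tobj C (unit C) B))
      (comp C (tarr C (comp C (inv_arr C (runit C A)) (runit C A)) (idm C (tobj C (unit C) B)))
        (comp C (theta C A (unit C) (unit C) B) (tarr C (inv_arr C (runit C A)) (inv_arr C (lunit C B))))))
      (tobj C A B) (tobj C A (tobj C (unit C) (tobj C (unit C) B)))"
    using isoh_comp[OF isoh_comp[OF isoh_comp[OF isoh_tarr[OF isoh_inv[OF isoh_runit[OF A]] isoh_inv[OF isoh_lunit[OF B]]]
      isoh_theta[OF A U U B]]
      isoh_tarr[OF isoh_comp[OF isoh_runit[OF A] isoh_inv[OF isoh_runit[OF A]]] isoh_id[OF IB]]]
      isoh_assoc[OF A U IB]] .
  have p2: "isoh (comp C (assoc C B (unit C) (tobj C A (unit C)))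
      (comp C (tarr C (comp C (inv_arr C (runit C B)) (lunit C B)) (idm C (tobj C A (unit C))))
        (comp C (theta C (unit C) A B (unit C)) (tarr C (inv_arr C (lunit C A)) (inv_arr C (runit C B))))))
      (tobj C A B) (tobj C B (tobj C (unit C) (tobj C A (unit C))))"
    using isoh_comp[OF isoh_comp[OF isoh_comp[OF isoh_tarr[OF isoh_inv[OF isoh_lunit[OF A]] isoh_inv[OF isoh_runit[OF B]]]
      isoh_theta[OF U A B U]]
      isoh_tarr[OF isoh_comp[OF isoh_lunit[OF B] isoh_inv[OF isoh_runit[OF B]]] isoh_id[OF AI]]]
      isoh_assoc[OF B U AI]] .
  have t1: "aux_total C (tobj C A B) (aux_pi1 C A B)"
    unfolding aux_pi1_def aux_comp_def aux_coh_def aux_tensor_def aux_id_def aux_bang_def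
    apply (simp only: prod.case cr)
    by (rule isoh_total[OF p1])
  have t2: "aux_total C (tobj C A B) (aux_pi2 C A B)"
    unfolding aux_pi2_def aux_comp_def aux_coh_def aux_tensor_def aux_id_def aux_bang_def
    apply (simp only: prod.case cr)
    by (rule isoh_total[OF p2])
  show ?thesis using t1 t2 by (rule conjI)
qed

end

theorem mainTheorem5:
  fixes C :: "('o, 'm) smrc"
  assumes "is_smrc C"
  shows "(\<forall>A \<in> obj C. aux_total C A (aux_bang C A))
       \<and> (\<forall>A \<in> obj C. \<forall>E \<in> obj C. \<forall>f \<in> hom C A (tobj C (unit C) E).
            aux_total C A (f, E) \<longrightarrow> aux_eq C A (unit C) (f, E) (aux_bang C A))
       \<and> (\<forall>A \<in> obj C. \<forall>B \<in> obj C.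
            aux_total C (tobj C A B) (aux_pi1 C A B) \<and> aux_total C (tobj C A B) (aux_pi2 C A B))"
proof -
  interpret sm C using assms by (unfold_locales)
  show ?thesis
  proof (intro conjI ballI impI)
    fix A assume "A \<in> obj C" then show "aux_total C A (aux_bang C A)" by (rule part1)
  next
    fix A E f assume "A \<in> obj C" "E \<in> obj C" "f \<in> hom C A (tobj C (unit C) E)" "aux_total C A (f, E)"
    then show "aux_eq C A (unit C) (f, E) (aux_bang C A)" by (rule part2)
  next
    fix A B assume "A \<in> obj C" "B \<in> obj C"
    then show "aux_total C (tobj C A B) (aux_pi1 C A B)" using part3 by blast
  next
    fix A B assume "A \<in> obj C" "B \<in> obj C"
    then show "aux_total C (tobj C A B) (aux_pi2 C A B)" using part3 by blast
  qed
qed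

end
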